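(* Let $C$ be the ideal of the Kauffman monoid $\mathcal{K}_3$ generated by $c$. Then $\mathcal{K}_3\setminus C=\{1,h_1,h_2,h_1h_2,h_2h_1\}$. Moreover, the Rees quotient $\mathcal{K}_3/C$ is isomorphic to the 6-element Brandt monoid $B_2^1$ via $h_1\mapsto a$, $h_2\mapsto b$. The involution induced on $\mathcal{K}_3/C$ by the reflection swaps $ab$ and $ba$ and fixes all other elements; consequently $\{ab,ba,0\}$ is an involution subsemigroup isomorphic to the twisted semilattice $TSL$. Finally, each Zimin word is an involutory isoterm relative to $\mathcal{K}_3$ regarded as an involution semigroup under reflection.
   Context: $\mathcal{K}_3$ is the monoid presented by generators $c,h_1,h_2$ and relations $h_1h_2h_1=h_1$, $h_2h_1h_2=h_2$, and $h_i^2=ch_i=h_ic$ for $i=1,2$. The reflection ${}^*$ is the unique involutory anti-automorphism of $\mathcal{K}_3$ fixing $c,h_1,h_2$. The Brandt monoid $B_2^1$ is the monoid with zero $\{1,a,b,ab,ba,0\}$ defined by $a^2=b^2=0$, $aba=a$, $bab=b$. The twisted semilattice $TSL$ is the involution semigroup $\{e,f,0\}$ with $e^2=e$, $f^2=f$, all other products equal to $0$, and $e^\star=f$, $f^\star=e$, $0^\star=0$. Zimin words are defined by $Z_1=x_1$ and $Z_{n+1}=Z_nx_{n+1}Z_n$. A word $v$ is an involutory isoterm relative to an involution semigroup $\mathcal{S}$ if the only involutory word $v'$ (an element of the free semigroup on $X\cup\{x^\star\mid x\in X\}$, with $(x_1\cdots x_m)^\star=x_m^\star\cdots x_1^\star$)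 such that $\mathcal{S}$ satisfies $v\approx v'$ is $v'=v$. *)

theory Defs
  imports Main
begin

text \<open>Elements of K_3 are represented by words over the
generators (the free monoid), modulo the congruence kcong generated by the
defining relations.\<close>

datatype gen = Cg | H1 | H2

inductive krel :: "gen list \<Rightarrow> gen list \<Rightarrow> bool" where
  r1: "krel [H1, H2, H1] [H1]"
| r2: "krel [H2, H1, H2] [H2]"
| r3: "krel [H1, H1] [Cg, H1]"
| r4: "krel [Cg, H1] [H1, Cg]"
| r5: "krel [H2, H2] [Cg, H2]"
| r6: "krel [Cg, H2] [H2, Cg]"

inductive kcong :: "gen list \<Rightarrow> gen list \<Rightarrow> bool" where
  kc_rel: "krel u v \<Longrightarrow> kcong (p @ u @ q) (p @ v @ q)"
| kc_refl: "kcong u u"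
| kc_sym: "kcong u v \<Longrightarrow> kcong v u"
| kc_trans: "kcong u v \<Longrightarrow> kcong v w \<Longrightarrow> kcong u w"

definition inC :: "gen list \<Rightarrow> bool" where
  "inC w \<longleftrightarrow> (\<exists>p q. kcong w (p @ [Cg] @ q))"

definition rees :: "gen list \<Rightarrow> gen list \<Rightarrow> bool" where
  "rees u v \<longleftrightarrow> kcong u v \<or> (inC u \<and> inC v)"

text \<open>The reflection: the anti-automorphism fixing the generators, on words.\<close>
definition refl_word :: "gen list \<Rightarrow> gen list" where
  "refl_word w = rev w"

datatype B = B1 | Ba | Bb | Bab | Bba | B0

fun bmul :: "B \<Rightarrow> B \<Rightarrow> B" where
  "bmul B1 y = y"
| "bmul x B1 = x"
| "bmul B0 y = B0"
| "bmul x B0 = B0"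
| "bmul Ba Ba = B0"
| "bmul Ba Bb = Bab"
| "bmul Ba Bab = B0"
| "bmul Ba Bba = Ba"
| "bmul Bb Ba = Bba"
| "bmul Bb Bb = B0"
| "bmul Bb Bab = Bb"
| "bmul Bb Bba = B0"
| "bmul Bab Ba = Ba"
| "bmul Bab Bb = B0"
| "bmul Bab Bab = Bab"
| "bmul Bab Bba = B0"
| "bmul Bba Ba = B0"
| "bmul Bba Bb = Bb"
| "bmul Bba Bab = B0"
| "bmul Bba Bba = Bba"

fun gimg :: "gen \<Rightarrow> B" where
  "gimg Cg = B0"
| "gimg H1 = Ba"
| "gimg H2 = Bb"

definition kphi :: "gen list \<Rightarrow> B" where
  "kphi w = foldr (\<lambda>g acc. bmul (gimg g) acc) w B1"

fun binv :: "B \<Rightarrow> B" where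
  "binv Bab = Bba"
| "binv Bba = Bab"
| "binv x = x"

datatype T = Te | Tf | T0

fun tmul :: "T \<Rightarrow> T \<Rightarrow> T" where
  "tmul Te Te = Te"
| "tmul Tf Tf = Tf"
| "tmul x y = T0"

fun tstar :: "T \<Rightarrow> T" where
  "tstar Te = Tf"
| "tstar Tf = Te"
| "tstar T0 = T0"

text \<open>Letters of involutory words: a variable x_n or its star x_n^*.\<close>
datatype letter = V nat | S nat

fun lstar :: "letter \<Rightarrow> letter" where
  "lstar (V n) = S n"
| "lstar (S n) = V n"

fun leval :: "(nat \<Rightarrow> gen list) \<Rightarrow> letter \<Rightarrow> gen list" where
  "leval \<sigma> (V n) = \<sigma> n"
| "leval \<sigma> (S n) = refl_word (\<sigma> n)"

definition weval :: "(nat \<Rightarrow> gen list) \<Rightarrow> letter list \<Rightarrow> gen list" where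
  "weval \<sigma> w = concat (map (leval \<sigma>) w)"

definition K3_satisfies :: "letter list \<Rightarrow> letter list \<Rightarrow> bool" where
  "K3_satisfies v v' \<longleftrightarrow> (\<forall>\<sigma>. kcong (weval \<sigma> v) (weval \<sigma> v'))"

text \<open>Involutory words are elements of the free semigroup, i.e. nonempty lists.\<close>
definition K3_inv_isoterm :: "letter list \<Rightarrow> bool" where
  "K3_inv_isoterm v \<longleftrightarrow> (\<forall>v'. v' \<noteq> [] \<and> K3_satisfies v v' \<longrightarrow> v' = v)"

primrec zimin :: "nat \<Rightarrow> letter list" where
  "zimin 0 = []"
| "zimin (Suc n) = zimin n @ [V (Suc n)] @ zimin n"

end

theory Submission
  imports Defs
begin

lemma bmul_assoc: "bmul (bmul x y) z = bmul x (bmul y z)"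
  by (cases x; cases y; cases z) auto

lemma bmul_0r[simp]: "bmul x B0 = B0" by (cases x) auto
lemma bmul_1r[simp]: "bmul x B1 = x" by (cases x) auto
lemma bmul_0l[simp]: "bmul B0 x = B0" by (cases x) auto

lemma binv_anti: "binv (bmul x y) = bmul (binv y) (binv x)"
  by (cases x; cases y) auto

lemma kcong_ctx: "kcong u v \<Longrightarrow> kcong (x @ u @ y) (x @ v @ y)"
proof (induction rule: kcong.induct)
  case (kc_rel u v p q)
  have "kcong ((x@p) @ u @ (q@y)) ((x@p) @ v @ (q@y))" by (rule kcong.kc_rel[OF kc_rel])
  then show ?case by simp
next
  case (kc_trans u v w) then show ?case by (meson kcong.kc_trans)
qed (auto intro: kcong.intros)

lemma kphi_Nil[simp]: "kphi [] = B1" by (simp add: kphi_def)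
lemma kphi_Cons[simp]: "kphi (g # w) = bmul (gimg g) (kphi w)" by (simp add: kphi_def)
lemma kphi_append: "kphi (u @ v) = bmul (kphi u) (kphi v)"
  by (induction u) (simp_all add: bmul_assoc)

lemma kphi_krel: "krel u v \<Longrightarrow> kphi u = kphi v"
  by (induction rule: krel.induct) simp_all

lemma kphi_kcong: "kcong u v \<Longrightarrow> kphi u = kphi v"
  by (induction rule: kcong.induct) (auto simp: kphi_append kphi_krel)

definition five :: "gen list set" where "five = {[], [H1], [H2], [H1, H2], [H2, H1]}"

lemma inC_kcong: "kcong w w' \<Longrightarrow> inC w' \<Longrightarrow> inC w"
  unfolding inC_def by (meson kcong.kc_trans)

lemma nf_step: "v \<in> five \<Longrightarrow> inC (g#v) \<or> (\<exists>v'\<in>five. kcong (g#v) v')"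
proof -
  have f1: "kcong [H1,H1] ([]@[Cg]@[H1])" using kcong.kc_rel[OF krel.r3, of "[]" "[]"] by simp
  have f2: "kcong [H1,H1,H2] ([]@[Cg]@[H1,H2])" using kcong.kc_rel[OF krel.r3, of "[]" "[H2]"] by simp
  have f3: "kcong [H1,H2,H1] [H1]" using kcong.kc_rel[OF krel.r1, of "[]" "[]"] by simp
  have g1: "kcong [H2,H2] ([]@[Cg]@[H2])" using kcong.kc_rel[OF krel.r5, of "[]" "[]"] by simp
  have g2: "kcong [H2,H2,H1] ([]@[Cg]@[H2,H1])" using kcong.kc_rel[OF krel.r5, of "[]" "[H1]"] by simp
  have g3: "kcong [H2,H1,H2] [H2]" using kcong.kc_rel[OF krel.r2, of "[]" "[]"] by simp
  have c: "kcong (Cg#v) ([]@[Cg]@v)" by (simp add: kcong.kc_refl)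
  assume v: "v \<in> five"
  have i1: "inC [H1,H1]" "inC [H1,H1,H2]" "inC [H2,H2]" "inC [H2,H2,H1]"
    using f1 f2 g1 g2 unfolding inC_def by blast+
  have i0: "inC (Cg#v)" using c unfolding inC_def by blast
  have k5: "[H1,H2] \<in> five" "[H2,H1] \<in> five" "[H1] \<in> five" "[H2] \<in> five"
    by (auto simp: five_def)
  show ?thesis
  proof (cases g)
    case Cg then show ?thesis using i0 by simp
  next
    case H1 then show ?thesis using v i1 f3 k5 kcong.kc_refl unfolding five_def by auto
  next
    case H2 then show ?thesis using v i1 g3 k5 kcong.kc_refl unfolding five_def by auto
  qed
qed

lemma nf: "inC w \<or> (\<exists>v\<in>five. kcong w v)"
proof (induction w)
  case Nil then show ?case by (auto simp: five_def intro: kcong.kc_refl)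
next
  case (Cons g w)
  then show ?case
  proof
    assume "inC w"
    then obtain p q where "kcong w (p@[Cg]@q)" unfolding inC_def by blast
    from kcong_ctx[OF this, of "[g]" "[]"] have "kcong (g#w) ((g#p)@[Cg]@q)" by simp
    then show ?thesis unfolding inC_def by blast
  next
    assume "\<exists>v\<in>five. kcong w v"
    then obtain v where v: "v \<in> five" "kcong w v" by blast
    from kcong_ctx[OF v(2), of "[g]" "[]"] have k: "kcong (g#w) (g#v)" by simp
    from nf_step[OF v(1), of g] show ?thesis
      using k inC_kcong kcong.kc_trans by blast
  qed
qed

lemma kphi_five: "v \<in> five \<Longrightarrow> kphi v \<noteq> B0" by (auto simp: five_def)
lemma kphi_five_inj: "v1 \<in> five \<Longrightarrow> v2 \<in> five \<Longrightarrow> kphi v1 = kphi v2 \<Longrightarrow> v1 = v2"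
  by (auto simp: five_def)

lemma kphi_B0: "kphi w = B0 \<longleftrightarrow> inC w"
proof
  assume "inC w"
  then obtain p q where "kcong w (p@[Cg]@q)" unfolding inC_def by blast
  then show "kphi w = B0" by (simp add: kphi_kcong kphi_append)
next
  assume "kphi w = B0"
  then show "inC w" using nf kphi_five kphi_kcong by metis
qed

lemma part1: "\<not> inC w \<longleftrightarrow> (\<exists>v \<in> five. kcong w v)"
  using nf kphi_B0 kphi_five kphi_kcong by metis

lemma part2: "rees u v \<longleftrightarrow> kphi u = kphi v"
proof
  assume "rees u v" then show "kphi u = kphi v"
    unfolding rees_def using kphi_B0 kphi_kcong by metis
next
  assume e: "kphi u = kphi v"
  show "rees u v"
  proof (cases "kphi u = B0")
    case True then have "inC u" "inC v" using e kphi_B0 by metis+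
    then show ?thesis unfolding rees_def by blast
  next
    case False
    then obtain v1 v2 where "v1 \<in> five" "kcong u v1" "v2 \<in> five" "kcong v v2"
      using e kphi_B0 nf by metis
    moreover then have "v1 = v2" using kphi_five_inj e kphi_kcong by metis
    ultimately show ?thesis unfolding rees_def by (meson kcong.kc_sym kcong.kc_trans)
  qed
qed

lemma krel_rev: "krel u v \<Longrightarrow> kcong (rev u) (rev v)"
proof (induction rule: krel.induct)
  case r1 then show ?case using kcong.kc_rel[OF krel.r1, of "[]" "[]"] by simp
next
  case r2 then show ?case using kcong.kc_rel[OF krel.r2, of "[]" "[]"] by simp
next
  case r3 then show ?case using kcong.kc_rel[OF krel.r3, of "[]" "[]"]
      kcong.kc_rel[OF krel.r4, of "[]" "[]"] kcong.kc_trans by fastforce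
next
  case r4 then show ?case using kcong.kc_rel[OF krel.r4, of "[]" "[]"] kcong.kc_sym by fastforce
next
  case r5 then show ?case using kcong.kc_rel[OF krel.r5, of "[]" "[]"]
      kcong.kc_rel[OF krel.r6, of "[]" "[]"] kcong.kc_trans by fastforce
next
  case r6 then show ?case using kcong.kc_rel[OF krel.r6, of "[]" "[]"] kcong.kc_sym by fastforce
qed

lemma kcong_rev: "kcong u v \<Longrightarrow> kcong (refl_word u) (refl_word v)"
  unfolding refl_word_def
proof (induction rule: kcong.induct)
  case (kc_rel u v p q)
  then show ?case using kcong_ctx[OF krel_rev[OF kc_rel], of "rev q" "rev p"] by simp
qed (auto intro: kcong.intros)

lemma binv_gimg[simp]: "binv (gimg g) = gimg g" by (cases g) auto

lemma kphi_rev: "kphi (refl_word w) = binv (kphi w)"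
  unfolding refl_word_def
proof (induction w)
  case Nil then show ?case by simp
next
  case (Cons g w)
  have "kphi (rev (g#w)) = bmul (kphi (rev w)) (gimg g)" by (simp add: kphi_append)
  also have "\<dots> = bmul (binv (kphi w)) (binv (gimg g))" using Cons by simp
  also have "\<dots> = binv (kphi (g#w))" by (simp only: kphi_Cons binv_anti)
  finally show ?case .
qed

fun lidx :: "letter \<Rightarrow> nat" where "lidx (V n) = n" | "lidx (S n) = n"
fun lB :: "(nat \<Rightarrow> B) \<Rightarrow> letter \<Rightarrow> B" where
  "lB \<sigma> (V n) = \<sigma> n" | "lB \<sigma> (S n) = binv (\<sigma> n)"
definition beval :: "(nat \<Rightarrow> B) \<Rightarrow> letter list \<Rightarrow> B" where
  "beval \<sigma> w = foldr (\<lambda>l acc. bmul (lB \<sigma> l) acc) w B1"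
lemma beval_Nil[simp]: "beval \<sigma> [] = B1" by (simp add: beval_def)
lemma beval_Cons[simp]: "beval \<sigma> (l#w) = bmul (lB \<sigma> l) (beval \<sigma> w)" by (simp add: beval_def)

lemma weval_Cons: "weval \<tau> (l#w) = leval \<tau> l @ weval \<tau> w" by (simp add: weval_def)
lemma weval_Nil: "weval \<tau> [] = []" by (simp add: weval_def)

lemma kphi_weval: "kphi (weval \<tau> w) = beval (\<lambda>n. kphi (\<tau> n)) w"
proof (induction w)
  case Nil then show ?case by (simp add: weval_Nil)
next
  case (Cons l w) then show ?case
    by (cases l) (simp_all add: weval_Cons kphi_append kphi_rev)
qed

lemma kphi_surj: "surj kphi"
proof -
  have "\<And>b. \<exists>w. kphi w = b"
  proof -
    fix b show "\<exists>w. kphi w = b"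
      apply (cases b)
      apply (rule exI[of _ "[]"]; simp)
      apply (rule exI[of _ "[H1]"]; simp)
      apply (rule exI[of _ "[H2]"]; simp)
      apply (rule exI[of _ "[H1,H2]"]; simp)
      apply (rule exI[of _ "[H2,H1]"]; simp)
      apply (rule exI[of _ "[Cg]"]; simp)
      done
  qed
  then show ?thesis unfolding surj_def by metis
qed

lemma sat_B: "K3_satisfies v v' \<Longrightarrow> beval \<sigma> v = beval \<sigma> v'"
proof -
  assume a: "K3_satisfies v v'"
  define \<tau> where "\<tau> n = (SOME w. kphi w = \<sigma> n)" for n
  have t: "(\<lambda>n. kphi (\<tau> n)) = \<sigma>"
  proof
    fix n
    have "\<exists>w. kphi w = \<sigma> n" using kphi_surj unfolding surj_def by metis
    then show "kphi (\<tau> n) = \<sigma> n" unfolding \<tau>_def by (rule someI_ex)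
  qed
  have "kphi (weval \<tau> v) = kphi (weval \<tau> v')"
    using a unfolding K3_satisfies_def using kphi_kcong by blast
  then show ?thesis using t kphi_weval by simp
qed

fun intl :: "letter \<Rightarrow> letter list \<Rightarrow> letter list" where
  "intl x [] = [x]" | "intl x (y#ys) = x # y # intl x ys"

lemma intl_app: "intl x (A @ y # B) = intl x A @ y # intl x B"
  by (induction A) auto

fun ren :: "(nat \<Rightarrow> nat) \<Rightarrow> letter \<Rightarrow> letter" where
  "ren f (V k) = V (f k)" | "ren f (S k) = S (f k)"

lemma zimin_intl: "zimin (Suc n) = intl (V 1) (map (ren Suc) (zimin n))"
proof (induction n)
  case 0 then show ?case by simp
next
  case (Suc n)
  have "zimin (Suc (Suc n)) = zimin (Suc n) @ [V (Suc (Suc n))] @ zimin (Suc n)" by simp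
  also have "\<dots> = intl (V 1) (map (ren Suc) (zimin n @ [V (Suc n)] @ zimin n))"
    by (simp only: Suc.IH) (simp add: intl_app)
  moreover have e: "zimin (Suc n) = zimin n @ [V (Suc n)] @ zimin n" by simp
  ultimately show ?case by (simp only: e)
qed

lemma map_ren_intl: "map (ren f) (intl x Y) = intl (ren f x) (map (ren f) Y)"
  by (induction Y) auto

lemma zimin_V: "l \<in> set (zimin n) \<Longrightarrow> \<exists>k. l = V k \<and> k \<ge> 1"
  by (induction n) auto

lemma ren_comp: "map (ren f) (map (ren g) w) = map (ren (f \<circ> g)) w"
proof (induction w)
  case (Cons l w) then show ?case by (cases l) auto
qed simp

lemma ren_o: "ren f \<circ> ren g = ren (f \<circ> g)"
proof
  fix l show "(ren f \<circ> ren g) l = ren (f \<circ> g) l" by (cases l) auto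
qed

lemma ren_id: "map (ren id) w = w"
proof (induction w)
  case (Cons l w) then show ?case by (cases l) auto
qed simp

lemma B_alt: "bmul p (bmul q r) = Ba \<Longrightarrow> p \<in> {Ba,Bb} \<Longrightarrow> q \<in> {Ba,Bb} \<Longrightarrow>
   p = Ba \<and> q = Bb \<and> r = Ba"
  by (cases r) auto

lemma lB_alt: "lB (\<lambda>m. if m = k then Ba else Bb) l = (if lidx l = k then Ba else Bb)"
  by (cases l) auto

lemma alt_lemma:
  assumes "beval (\<lambda>m. if m = k then Ba else Bb) w = Ba"
    and "\<forall>l\<in>set w. lidx l = k \<longrightarrow> l = x"
  shows "w = intl x (filter (\<lambda>l. lidx l \<noteq> k) w)"
  using assms
proof (induction w rule: induct_list012)
  case 1 then show ?case by simp
next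
  case (2 l)
  then have "lB (\<lambda>m. if m = k then Ba else Bb) l = Ba" by simp
  then have "lidx l = k" unfolding lB_alt by (cases "lidx l = k") auto
  then show ?case using 2 by simp
next
  case (3 l1 l2 zs)
  let ?s = "\<lambda>m. if m = k then Ba else Bb"
  from 3(3) have eq: "bmul (lB ?s l1) (bmul (lB ?s l2) (beval ?s zs)) = Ba" by simp
  have m1: "lB ?s l1 \<in> {Ba,Bb}" "lB ?s l2 \<in> {Ba,Bb}" unfolding lB_alt by simp_all
  have h: "lB ?s l1 = Ba" "lB ?s l2 = Bb" "beval ?s zs = Ba"
    using B_alt[OF eq m1] by blast+
  have i1: "lidx l1 = k" using h(1) unfolding lB_alt by (cases "lidx l1 = k") auto
  have i2: "lidx l2 \<noteq> k" using h(2) unfolding lB_alt by (cases "lidx l2 = k") auto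
  have zs: "zs = intl x (filter (\<lambda>l. lidx l \<noteq> k) zs)" using 3(4) by (intro 3(1)[OF h(3)]) auto
  have x: "l1 = x" using i1 3(4) by simp
  have f: "filter (\<lambda>l. lidx l \<noteq> k) (l1#l2#zs) = l2 # filter (\<lambda>l. lidx l \<noteq> k) zs"
    using i1 i2 by simp
  have g: "intl x (filter (\<lambda>l. lidx l \<noteq> k) (l1#l2#zs)) = x # l2 # intl x (filter (\<lambda>l. lidx l \<noteq> k) zs)"
    unfolding f by simp
  have c: "x # l2 # zs = x # l2 # intl x (filter (\<lambda>l. lidx l \<noteq> k) zs)"
    by (rule arg_cong[OF zs])
  have "l1#l2#zs = x#l2#zs" using x by simp
  also have "\<dots> = x # l2 # intl x (filter (\<lambda>l. lidx l \<noteq> k) zs)" by (rule c)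
  also have "\<dots> = intl x (filter (\<lambda>l. lidx l \<noteq> k) (l1#l2#zs))" by (rule g[symmetric])
  finally show ?case .
qed

lemma star_aux: "\<forall>l\<in>set w. lB \<sigma> l \<in> {B1,Bab,Bba} \<Longrightarrow>
   (Bba \<notin> lB \<sigma> ` set w \<longrightarrow> beval \<sigma> w \<in> {B1,Bab}) \<and> (Bba \<in> lB \<sigma> ` set w \<longrightarrow> beval \<sigma> w \<in> {Bba, B0})"
proof (induction w)
  case Nil then show ?case by simp
next
  case (Cons l w)
  then have h: "lB \<sigma> l \<in> {B1,Bab,Bba}" and IH: "Bba \<notin> lB \<sigma> ` set w \<longrightarrow> beval \<sigma> w \<in> {B1,Bab}"
    "Bba \<in> lB \<sigma> ` set w \<longrightarrow> beval \<sigma> w \<in> {Bba, B0}" by auto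
  show ?case using h IH by (cases "Bba \<in> lB \<sigma> ` set w") auto
qed

lemma lB_star: "lB (\<lambda>m. if m = k then Bab else B1) l \<in> {B1,Bab,Bba}" by (cases l) auto

lemma star_lemma:
  assumes "beval (\<lambda>m. if m = k then Bab else B1) w = Bab"
  shows "\<forall>l\<in>set w. lidx l = k \<longrightarrow> l = V k"
proof (intro ballI impI)
  let ?s = "\<lambda>m. if m = k then Bab else B1"
  fix l assume l: "l \<in> set w" "lidx l = k"
  have a: "\<forall>l\<in>set w. lB ?s l \<in> {B1,Bab,Bba}" using lB_star by blast
  show "l = V k"
  proof (cases l)
    case (S n)
    then have "Bba \<in> lB ?s ` set w" using l by force
    then show ?thesis using star_aux[OF a] assms by auto
  qed (use l in auto)
qed

lemma filter_beval: "beval \<sigma> (filter (\<lambda>l. lidx l \<noteq> k) w) = beval (\<sigma>(k := B1)) w"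
proof (induction w)
  case (Cons l w) then show ?case by (cases l) auto
qed simp

lemma zeval1: "\<forall>l\<in>set Y. \<exists>m. l = V m \<and> m \<noteq> k \<Longrightarrow>
  beval (\<lambda>m. if m = k then Ba else Bb) (intl (V k) Y) = Ba"
  by (induction Y) auto

lemma zeval2: "\<forall>l\<in>set Y. \<exists>m. l = V m \<and> m \<noteq> k \<Longrightarrow>
  beval (\<lambda>m. if m = k then Bab else B1) (intl (V k) Y) = Bab"
  by (induction Y) auto

lemma filter_intl: "\<forall>l\<in>set Y. \<exists>m. l = V m \<and> m \<noteq> k \<Longrightarrow>
  filter (\<lambda>l. lidx l \<noteq> k) (intl (V k) Y) = Y"
  by (induction Y) auto

lemma core:
  assumes "\<forall>\<sigma>. beval \<sigma> (intl (V k) Y) = beval \<sigma> v'"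
    and Y: "\<forall>l\<in>set Y. \<exists>m. l = V m \<and> m \<noteq> k"
    and f: "filter (\<lambda>l. lidx l \<noteq> k) v' = Y"
  shows "v' = intl (V k) Y"
proof -
  have "beval (\<lambda>m. if m = k then Bab else B1) v' = Bab" using assms zeval2 by metis
  then have s: "\<forall>l\<in>set v'. lidx l = k \<longrightarrow> l = V k" by (rule star_lemma)
  have "beval (\<lambda>m. if m = k then Ba else Bb) v' = Ba" using assms zeval1 by metis
  from alt_lemma[OF this s] f show ?thesis by simp
qed

lemma B0_in: "\<exists>l\<in>set w. lB \<sigma> l = B0 \<Longrightarrow> beval \<sigma> w = B0"
proof (induction w)
  case (Cons l w) then show ?case by (cases "lB \<sigma> l = B0") auto
qed simp

lemma iso_main:
  "\<forall>f v'. inj f \<longrightarrow> (\<forall>\<sigma>. beval \<sigma> (map (ren f) (zimin (Suc n))) = beval \<sigma> v')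
     \<longrightarrow> v' = map (ren f) (zimin (Suc n))"
proof (induction n)
  case 0
  show ?case
  proof (intro allI impI)
    fix f :: "nat \<Rightarrow> nat" and v'
    assume e: "\<forall>\<sigma>. beval \<sigma> (map (ren f) (zimin (Suc 0))) = beval \<sigma> v'"
    have Z: "map (ren f) (zimin (Suc 0)) = intl (V (f 1)) []" by simp
    have "filter (\<lambda>l. lidx l \<noteq> f 1) v' = []"
    proof (rule ccontr)
      assume "filter (\<lambda>l. lidx l \<noteq> f 1) v' \<noteq> []"
      then obtain l where l: "l \<in> set v'" "lidx l \<noteq> f 1"
        by (metis (mono_tags, lifting) filter_False)
      let ?s = "\<lambda>m. if m = f 1 then B1 else B0"
      have "lB ?s l = B0" using l(2) by (cases l) auto
      then have "beval ?s v' = B0" using l(1) B0_in by blast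
      moreover have "beval ?s v' = B1" using e[rule_format, of ?s] by simp
      ultimately show False by simp
    qed
    then show "v' = map (ren f) (zimin (Suc 0))"
      using core[of "f 1" "[]" v'] e Z by simp
  qed
next
  case (Suc n)
  show ?case
  proof (intro allI impI)
    fix f :: "nat \<Rightarrow> nat" and v'
    assume inj: "inj f"
    assume e: "\<forall>\<sigma>. beval \<sigma> (map (ren f) (zimin (Suc (Suc n)))) = beval \<sigma> v'"
    define Y where "Y = map (ren (f \<circ> Suc)) (zimin (Suc n))"
    have Z: "map (ren f) (zimin (Suc (Suc n))) = intl (V (f 1)) Y"
      unfolding Y_def
      by (subst zimin_intl) (simp add: map_ren_intl ren_o del: zimin.simps)
    have Yl: "\<forall>l\<in>set Y. \<exists>m. l = V m \<and> m \<noteq> f 1"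
    proof
      fix l assume "l \<in> set Y"
      then obtain l0 where "l0 \<in> set (zimin (Suc n))" "l = ren (f \<circ> Suc) l0"
        unfolding Y_def by (auto simp del: zimin.simps)
      then obtain k where "l = V (f (Suc k))" "k \<ge> 1" using zimin_V by fastforce
      moreover have "f (Suc k) \<noteq> f 1" using inj \<open>k \<ge> 1\<close> by (simp add: inj_eq)
      ultimately show "\<exists>m. l = V m \<and> m \<noteq> f 1" by blast
    qed
    have "\<forall>\<sigma>. beval \<sigma> Y = beval \<sigma> (filter (\<lambda>l. lidx l \<noteq> f 1) v')"
    proof
      fix \<sigma>
      have "beval \<sigma> Y = beval \<sigma> (filter (\<lambda>l. lidx l \<noteq> f 1) (intl (V (f 1)) Y))"
        using filter_intl[OF Yl] by simp
      also have "\<dots> = beval (\<sigma>(f 1 := B1)) (intl (V (f 1)) Y)" by (rule filter_beval)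
      also have "\<dots> = beval (\<sigma>(f 1 := B1)) v'" using e Z by metis
      also have "\<dots> = beval \<sigma> (filter (\<lambda>l. lidx l \<noteq> f 1) v')" by (rule filter_beval[symmetric])
      finally show "beval \<sigma> Y = beval \<sigma> (filter (\<lambda>l. lidx l \<noteq> f 1) v')" .
    qed
    moreover have "inj (f \<circ> Suc)" using inj by (simp add: inj_compose)
    ultimately have "filter (\<lambda>l. lidx l \<noteq> f 1) v' = Y"
      using Suc.IH unfolding Y_def by metis
    then show "v' = map (ren f) (zimin (Suc (Suc n)))"
      using core[of "f 1" Y v'] e Z Yl by metis
  qed
qed

lemma zimin_iso: "n \<ge> 1 \<Longrightarrow> K3_inv_isoterm (zimin n)"
proof -
  assume "n \<ge> 1"
  then obtain m where n: "n = Suc m" by (cases n) auto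
  show ?thesis unfolding K3_inv_isoterm_def
  proof (intro allI impI)
    fix v' assume "v' \<noteq> [] \<and> K3_satisfies (zimin n) v'"
    then have "\<forall>\<sigma>. beval \<sigma> (map (ren id) (zimin (Suc m))) = beval \<sigma> v'"
      using sat_B n ren_id by metis
    then show "v' = zimin n" using iso_main[of m] n ren_id by (metis inj_on_id)
  qed
qed

theorem mainTheorem8:
  shows "(\<forall>w. \<not> inC w \<longleftrightarrow>
            (\<exists>v \<in> {[], [H1], [H2], [H1, H2], [H2, H1]}. kcong w v))
    \<and> (\<forall>u v. rees u v \<longleftrightarrow> kphi u = kphi v)
    \<and> surj kphi
    \<and> (\<forall>u v. kphi (u @ v) = bmul (kphi u) (kphi v))
    \<and> kphi [] = B1 \<and> kphi [H1] = Ba \<and> kphi [H2] = Bb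
    \<and> (\<forall>u v. kcong u v \<longrightarrow> kcong (refl_word u) (refl_word v))
    \<and> (\<forall>w. kphi (refl_word w) = binv (kphi w))
    \<and> (\<forall>x \<in> {Bab, Bba, B0}. \<forall>y \<in> {Bab, Bba, B0}.
          bmul x y \<in> {Bab, Bba, B0} \<and> binv x \<in> {Bab, Bba, B0})
    \<and> (\<exists>\<psi>. bij_betw \<psi> {Bab, Bba, B0} (UNIV :: T set)
          \<and> (\<forall>x \<in> {Bab, Bba, B0}. \<forall>y \<in> {Bab, Bba, B0}.
                \<psi> (bmul x y) = tmul (\<psi> x) (\<psi> y))
          \<and> (\<forall>x \<in> {Bab, Bba, B0}. \<psi> (binv x) = tstar (\<psi> x)))
    \<and> (\<forall>n \<ge> 1. K3_inv_isoterm (zimin n))"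
proof -
  define \<psi> where "\<psi> x = (case x of Bab \<Rightarrow> Te | Bba \<Rightarrow> Tf | _ \<Rightarrow> T0)" for x
  have UT: "(UNIV :: T set) = {Te, Tf, T0}" using T.exhaust by blast
  have bij: "bij_betw \<psi> {Bab, Bba, B0} (UNIV :: T set)"
    unfolding bij_betw_def UT inj_on_def \<psi>_def by auto
  have ex: "\<exists>\<psi>. bij_betw \<psi> {Bab, Bba, B0} (UNIV :: T set)
          \<and> (\<forall>x \<in> {Bab, Bba, B0}. \<forall>y \<in> {Bab, Bba, B0}.
                \<psi> (bmul x y) = tmul (\<psi> x) (\<psi> y))
          \<and> (\<forall>x \<in> {Bab, Bba, B0}. \<psi> (binv x) = tstar (\<psi> x))"
    by (rule exI[of _ \<psi>]) (auto simp: bij \<psi>_def)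
  show ?thesis
    using part1[unfolded five_def] part2 kphi_surj kphi_append kcong_rev kphi_rev ex zimin_iso
    by auto
qed

end
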